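(* For every $n\ge 3$, \[ \max\{\rho(\mathsf{C}_n),1\} = \max\{\rho(\mathsf{SC}_n),1\}, \] where $\mathsf{C}_n$ is the compacted matrix of rank $n$ and $\mathsf{SC}_n$ is the super compacted matrix of rank $n$.
   Context: $\rho(M)$ is the spectral radius. The compacted matrix of rank $n$ is the $(2n-1)\times(2n-1)$ matrix $\mathsf{C}_n=(c_{ij})$ with: $c_{ij}=1$ if $j=i+1$ and $1\le i\le n-3$; $c_{ij}=1$ if $i=n-2$ and $j\in\{n-1,n\}$; $c_{ij}=n-2$ if $i=n-1$ and $1\le j\le n$; $c_{ij}=n-1$ if $i=n-1$ and $n+1\le j\le 2n-1$; $c_{nj}=1$ for all $j$; $c_{ij}=n-1$ if $i=n+1$ and $1\le j\le n-1$; $c_{ij}=n-2$ if $i=n+1$ and $n\le j\le 2n-1$; $c_{ij}=1$ if $i=n+2$ and $j\in\{n,n+1\}$; $c_{ij}=1$ if $j=i-1$ and $n+3\le i\le 2n-1$; $c_{ij}=0$ otherwise. The super compacted matrix of rank $n$ is the $n\times n$ matrix $\mathsf{SC}_n=(s_{ij})$ with: $s_{ij}=1$ if ($i\le n-2$ and $j=i+1$) or $i=n$; $s_{ij}=2$ if $i=n-2$ and $j=n$; $s_{ij}=2n-3$ if $i=n-1$ and $j<n$; $s_{ij}=2n-4$ if $i=n-1$ and $j=n$; $s_{ij}=0$ otherwise. *)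

theory Defs
  imports "Jordan_Normal_Form.Spectral_Radius"
begin

text \<open>Entries are given with the paper's 1-based indices i, j; the matrix
  library is 0-based, hence the shift by 1.\<close>

definition compacted_entry :: "nat \<Rightarrow> nat \<Rightarrow> nat \<Rightarrow> nat" where
  "compacted_entry n i j =
     (if j = i + 1 \<and> 1 \<le> i \<and> i \<le> n - 3 then 1
      else if i = n - 2 \<and> (j = n - 1 \<or> j = n) then 1
      else if i = n - 1 \<and> 1 \<le> j \<and> j \<le> n then n - 2
      else if i = n - 1 \<and> n + 1 \<le> j \<and> j \<le> 2 * n - 1 then n - 1
      else if i = n then 1
      else if i = n + 1 \<and> 1 \<le> j \<and> j \<le> n - 1 then n - 1
      else if i = n + 1 \<and> n \<le> j \<and> j \<le> 2 * n - 1 then n - 2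
      else if i = n + 2 \<and> (j = n \<or> j = n + 1) then 1
      else if j + 1 = i \<and> n + 3 \<le> i \<and> i \<le> 2 * n - 1 then 1
      else 0)"

definition compacted_matrix :: "nat \<Rightarrow> complex mat" where
  "compacted_matrix n = mat (2 * n - 1) (2 * n - 1)
     (\<lambda>(i, j). of_nat (compacted_entry n (i + 1) (j + 1)))"

definition super_compacted_entry :: "nat \<Rightarrow> nat \<Rightarrow> nat \<Rightarrow> nat" where
  "super_compacted_entry n i j =
     (if (i \<le> n - 2 \<and> j = i + 1) \<or> i = n then 1
      else if i = n - 2 \<and> j = n then 2
      else if i = n - 1 \<and> j < n then 2 * n - 3
      else if i = n - 1 \<and> j = n then 2 * n - 4
      else 0)"

definition super_compacted_matrix :: "nat \<Rightarrow> complex mat" where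
  "super_compacted_matrix n = mat n n
     (\<lambda>(i, j). of_nat (super_compacted_entry n (i + 1) (j + 1)))"

end

theory Submission
  imports Defs
begin


lemma e1: "k < m+3 \<Longrightarrow> compacted_entry (m+3) (m+1+1) (k+1) = m+1"
  unfolding compacted_entry_def by simp
lemma e2: "m+3 \<le> k \<Longrightarrow> k < 2*m+5 \<Longrightarrow> compacted_entry (m+3) (m+1+1) (k+1) = m+2"
  unfolding compacted_entry_def by simp
lemma e3: "k < m+2 \<Longrightarrow> compacted_entry (m+3) (m+3+1) (k+1) = m+2"
  unfolding compacted_entry_def by simp
lemma e4: "m+2 \<le> k \<Longrightarrow> k < 2*m+5 \<Longrightarrow> compacted_entry (m+3) (m+3+1) (k+1) = m+1"
  unfolding compacted_entry_def by simp
lemma e5: "compacted_entry (m+3) (m+1) (k+1) = (if k = m+1 then 1 else 0) + (if k = m+2 then 1 else 0)"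
  unfolding compacted_entry_def by simp
lemma e6: "compacted_entry (m+3) (m+4+1) (k+1) = (if k = m+3 then 1 else 0) + (if k = m+2 then 1 else 0)"
  unfolding compacted_entry_def by simp
lemma e7: "i < m \<Longrightarrow> compacted_entry (m+3) (i+1) (k+1) = (if k = i+1 then 1 else 0)"
  unfolding compacted_entry_def by simp
lemma e8: "m+5 \<le> i \<Longrightarrow> i < 2*m+5 \<Longrightarrow> compacted_entry (m+3) (i+1) (k+1) = (if k = i-1 then 1 else 0)"
  unfolding compacted_entry_def by (simp, arith)
lemma e9: "compacted_entry (m+3) (m+2+1) j = 1"
  unfolding compacted_entry_def by (simp (no_asm) del: One_nat_def)

lemma s1: "i < m \<Longrightarrow> super_compacted_entry (m+3) (i+1) (k+1) = (if k = i+1 then 1 else 0)"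
  unfolding super_compacted_entry_def by simp
lemma s2: "super_compacted_entry (m+3) (m+1) (k+1) = (if k = m+1 then 1 else 0) + 2 * (if k = m+2 then 1 else 0)"
  unfolding super_compacted_entry_def by simp
lemma s3: "k < m+2 \<Longrightarrow> super_compacted_entry (m+3) (m+1+1) (k+1) = 2*m+3"
  unfolding super_compacted_entry_def by simp
lemma s3': "super_compacted_entry (m+3) (m+1+1) (m+2+1) = 2*m+2"
  unfolding super_compacted_entry_def by simp
lemma s4: "super_compacted_entry (m+3) (m+2+1) j = 1"
  unfolding super_compacted_entry_def by (simp (no_asm) del: One_nat_def)

lemma sum_delta_nat: "j < (N::nat) \<Longrightarrow> (\<Sum>k<N. (if k = j then (1::complex) else 0) * f k) = f j"
proof -
  assume "j < N"
  have "(\<Sum>k<N. (if k = j then (1::complex) else 0) * f k) = (\<Sum>k<N. if k = j then f k else 0)"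
    by (intro sum.cong) auto
  also have "\<dots> = f j" using \<open>j < N\<close> by (subst sum.delta) auto
  finally show ?thesis .
qed

lemma split_sum: "(\<Sum>k<N. g k) = (\<Sum>k<a. g k) + (\<Sum>k\<in>{a..<N}. (g k::complex))" if "(a::nat) \<le> N"
  using that by (metis atLeast0LessThan sum.atLeastLessThan_concat zero_le)

definition Crow :: "nat \<Rightarrow> (nat \<Rightarrow> complex) \<Rightarrow> nat \<Rightarrow> complex" where
  "Crow m f i = (\<Sum>k<2*m+5. of_nat (compacted_entry (m+3) (i+1) (k+1)) * f k)"

definition Srow :: "nat \<Rightarrow> (nat \<Rightarrow> complex) \<Rightarrow> nat \<Rightarrow> complex" where
  "Srow m f i = (\<Sum>k<m+3. of_nat (super_compacted_entry (m+3) (i+1) (k+1)) * f k)"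

lemma Crow_shift1: assumes "i < m" shows "Crow m f i = f (i+1)"
proof -
  have "Crow m f i = (\<Sum>k<2*m+5. (if k = i+1 then (1::complex) else 0) * f k)"
    unfolding Crow_def by (intro sum.cong refl, subst e7[OF assms], simp)
  also have "\<dots> = f (i+1)" using assms by (intro sum_delta_nat) simp
  finally show ?thesis .
qed

lemma Crow_shift2: assumes "m+5 \<le> i" "i < 2*m+5" shows "Crow m f i = f (i-1)"
proof -
  have "Crow m f i = (\<Sum>k<2*m+5. (if k = i-1 then (1::complex) else 0) * f k)"
    unfolding Crow_def by (intro sum.cong refl, subst e8[OF assms], simp)
  also have "\<dots> = f (i-1)" using assms by (intro sum_delta_nat) simp
  finally show ?thesis .
qed

lemma Crow_m: "Crow m f m = f (m+2) + f (m+1)"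
proof -
  have "Crow m f m = (\<Sum>k<2*m+5. (if k = m+1 then (1::complex) else 0) * f k + (if k = m+2 then (1::complex) else 0) * f k)"
    unfolding Crow_def by (intro sum.cong refl, subst e5, simp add: distrib_right)
  also have "\<dots> = (\<Sum>k<2*m+5. (if k = m+1 then (1::complex) else 0) * f k) + (\<Sum>k<2*m+5. (if k = m+2 then (1::complex) else 0) * f k)"
    by (simp only: sum.distrib)
  also have "(\<Sum>k<2*m+5. (if k = m+1 then (1::complex) else 0) * f k) = f (m+1)" by (rule sum_delta_nat) simp
  also have "(\<Sum>k<2*m+5. (if k = m+2 then (1::complex) else 0) * f k) = f (m+2)" by (rule sum_delta_nat) simp
  finally show ?thesis by (simp only: add.commute)
qed

lemma Crow_m4: "Crow m f (m+4) = f (m+2) + f (m+3)"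
proof -
  have "Crow m f (m+4) = (\<Sum>k<2*m+5. (if k = m+3 then (1::complex) else 0) * f k + (if k = m+2 then (1::complex) else 0) * f k)"
    unfolding Crow_def by (intro sum.cong refl, subst e6, simp add: distrib_right)
  also have "\<dots> = (\<Sum>k<2*m+5. (if k = m+3 then (1::complex) else 0) * f k) + (\<Sum>k<2*m+5. (if k = m+2 then (1::complex) else 0) * f k)"
    by (simp only: sum.distrib)
  also have "(\<Sum>k<2*m+5. (if k = m+3 then (1::complex) else 0) * f k) = f (m+3)" by (rule sum_delta_nat) simp
  also have "(\<Sum>k<2*m+5. (if k = m+2 then (1::complex) else 0) * f k) = f (m+2)" by (rule sum_delta_nat) simp
  finally show ?thesis by (simp only: add.commute)
qed

lemma Crow_m1: "Crow m f (m+1) = of_nat (m+1) * (\<Sum>k<m+3. f k) + of_nat (m+2) * (\<Sum>k\<in>{m+3..<2*m+5}. f k)"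
proof -
  have "Crow m f (m+1) = (\<Sum>k<m+3. of_nat (compacted_entry (m+3) (m+1+1) (k+1)) * f k) + (\<Sum>k\<in>{m+3..<2*m+5}. of_nat (compacted_entry (m+3) (m+1+1) (k+1)) * f k)"
    unfolding Crow_def by (rule split_sum) simp
  also have "(\<Sum>k<m+3. of_nat (compacted_entry (m+3) (m+1+1) (k+1)) * f k) = (\<Sum>k<m+3. of_nat (m+1) * f k)"
    by (intro sum.cong refl, subst e1; simp)
  also have "(\<Sum>k\<in>{m+3..<2*m+5}. of_nat (compacted_entry (m+3) (m+1+1) (k+1)) * f k) = (\<Sum>k\<in>{m+3..<2*m+5}. of_nat (m+2) * f k)"
    by (intro sum.cong refl, subst e2; simp)
  finally show ?thesis by (simp only: sum_distrib_left)
qed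

lemma Crow_m3: "Crow m f (m+3) = of_nat (m+2) * (\<Sum>k<m+2. f k) + of_nat (m+1) * (\<Sum>k\<in>{m+2..<2*m+5}. f k)"
proof -
  have "Crow m f (m+3) = (\<Sum>k<m+2. of_nat (compacted_entry (m+3) (m+3+1) (k+1)) * f k) + (\<Sum>k\<in>{m+2..<2*m+5}. of_nat (compacted_entry (m+3) (m+3+1) (k+1)) * f k)"
    unfolding Crow_def by (rule split_sum) simp
  also have "(\<Sum>k<m+2. of_nat (compacted_entry (m+3) (m+3+1) (k+1)) * f k) = (\<Sum>k<m+2. of_nat (m+2) * f k)"
    by (intro sum.cong refl, subst e3; simp)
  also have "(\<Sum>k\<in>{m+2..<2*m+5}. of_nat (compacted_entry (m+3) (m+3+1) (k+1)) * f k) = (\<Sum>k\<in>{m+2..<2*m+5}. of_nat (m+1) * f k)"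
    by (intro sum.cong refl, subst e4; simp)
  finally show ?thesis by (simp only: sum_distrib_left)
qed

lemma Crow_m2: "Crow m f (m+2) = (\<Sum>k<2*m+5. f k)"
  unfolding Crow_def e9 by simp

lemma Srow_shift: assumes "i < m" shows "Srow m f i = f (i+1)"
proof -
  have "Srow m f i = (\<Sum>k<m+3. (if k = i+1 then (1::complex) else 0) * f k)"
    unfolding Srow_def by (intro sum.cong refl, subst s1[OF assms], simp)
  also have "\<dots> = f (i+1)" using assms by (intro sum_delta_nat) simp
  finally show ?thesis .
qed

lemma Srow_m: "Srow m f m = f (m+1) + 2 * f (m+2)"
proof -
  have "Srow m f m = (\<Sum>k<m+3. (if k = m+1 then (1::complex) else 0) * f k + 2 * ((if k = m+2 then (1::complex) else 0) * f k))"
    unfolding Srow_def by (intro sum.cong refl, subst s2, simp)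
  also have "\<dots> = (\<Sum>k<m+3. (if k = m+1 then (1::complex) else 0) * f k) + 2 * (\<Sum>k<m+3. (if k = m+2 then (1::complex) else 0) * f k)"
    by (simp only: sum.distrib sum_distrib_left)
  also have "(\<Sum>k<m+3. (if k = m+1 then (1::complex) else 0) * f k) = f (m+1)" by (rule sum_delta_nat) simp
  also have "(\<Sum>k<m+3. (if k = m+2 then (1::complex) else 0) * f k) = f (m+2)" by (rule sum_delta_nat) simp
  finally show ?thesis .
qed

lemma Srow_m1: "Srow m f (m+1) = of_nat (2*m+3) * (\<Sum>k<m+2. f k) + of_nat (2*m+2) * f (m+2)"
proof -
  let ?g = "\<lambda>k. of_nat (super_compacted_entry (m+3) (m+1+1) (k+1)) * f k"
  have "Srow m f (m+1) = (\<Sum>k\<in>insert (m+2) {..<m+2}. ?g k)"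
    unfolding Srow_def by (rule sum.cong) auto
  also have "\<dots> = ?g (m+2) + (\<Sum>k<m+2. ?g k)" by (rule sum.insert) auto
  also have "(\<Sum>k<m+2. ?g k) = (\<Sum>k<m+2. of_nat (2*m+3) * f k)"
    by (intro sum.cong refl, subst s3; simp)
  also have "?g (m+2) = of_nat (2*m+2) * f (m+2)" using s3'[of m] by simp
  finally show ?thesis by (simp only: sum_distrib_left add.commute)
qed

lemma Srow_m2: "Srow m f (m+2) = (\<Sum>k<m+3. f k)"
  unfolding Srow_def s4 by simp




lemma C_carrier: "compacted_matrix (m+3) \<in> carrier_mat (2*m+5) (2*m+5)"
  unfolding compacted_matrix_def carrier_mat_def by simp

lemma S_carrier: "super_compacted_matrix (m+3) \<in> carrier_mat (m+3) (m+3)"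
  unfolding super_compacted_matrix_def carrier_mat_def by simp

lemma C_mult: assumes "v \<in> carrier_vec (2*m+5)" "i < 2*m+5"
  shows "(compacted_matrix (m+3) *\<^sub>v v) $ i = Crow m (\<lambda>k. v$k) i"
proof -
  let ?C = "compacted_matrix (m+3)"
  have d: "dim_row ?C = 2*m+5" "dim_col ?C = 2*m+5" "dim_vec v = 2*m+5"
    using C_carrier[of m] assms(1) by auto
  have "(?C *\<^sub>v v) $ i = row ?C i \<bullet> v" using assms d by (subst index_mult_mat_vec) auto
  also have "\<dots> = (\<Sum>k\<in>{0..<2*m+5}. row ?C i $ k * v $ k)" unfolding scalar_prod_def d ..
  also have "\<dots> = (\<Sum>k<2*m+5. of_nat (compacted_entry (m+3) (i+1) (k+1)) * v $ k)"
    unfolding atLeast0LessThan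
  proof (intro sum.cong refl)
    fix k assume "k \<in> {..<2*m+5}"
    hence "row ?C i $ k = ?C $$ (i,k)" using d assms(2) by (intro index_row) auto
    also have "\<dots> = of_nat (compacted_entry (m+3) (i+1) (k+1))"
      unfolding compacted_matrix_def using assms \<open>k \<in> _\<close> by (subst index_mat) auto
    finally show "row ?C i $ k * v $ k = of_nat (compacted_entry (m+3) (i+1) (k+1)) * v $ k" by simp
  qed
  finally show ?thesis unfolding Crow_def .
qed

lemma S_mult: assumes "v \<in> carrier_vec (m+3)" "i < m+3"
  shows "(super_compacted_matrix (m+3) *\<^sub>v v) $ i = Srow m (\<lambda>k. v$k) i"
proof -
  let ?C = "super_compacted_matrix (m+3)"
  have d: "dim_row ?C = m+3" "dim_col ?C = m+3" "dim_vec v = m+3"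
    using S_carrier[of m] assms(1) by auto
  have "(?C *\<^sub>v v) $ i = row ?C i \<bullet> v" using assms d by (subst index_mult_mat_vec) auto
  also have "\<dots> = (\<Sum>k\<in>{0..<m+3}. row ?C i $ k * v $ k)" unfolding scalar_prod_def d ..
  also have "\<dots> = (\<Sum>k<m+3. of_nat (super_compacted_entry (m+3) (i+1) (k+1)) * v $ k)"
    unfolding atLeast0LessThan
  proof (intro sum.cong refl)
    fix k assume "k \<in> {..<m+3}"
    hence "row ?C i $ k = ?C $$ (i,k)" using d assms(2) by (intro index_row) auto
    also have "\<dots> = of_nat (super_compacted_entry (m+3) (i+1) (k+1))"
      unfolding super_compacted_matrix_def using assms \<open>k \<in> _\<close> by (subst index_mat) auto
    finally show "row ?C i $ k * v $ k = of_nat (super_compacted_entry (m+3) (i+1) (k+1)) * v $ k" by simp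
  qed
  finally show ?thesis unfolding Srow_def .
qed

lemma refl_sum: "(\<Sum>k\<in>{(m::nat)+3..<2*m+5}. h k) = (\<Sum>k<m+2. (h (2*m+4-k) :: complex))"
  by (rule sum.reindex_bij_witness[of _ "\<lambda>k. 2*m+4-k" "\<lambda>k. 2*m+4-k"]) auto



lemma Crow_cong: "(\<And>k. k < 2*m+5 \<Longrightarrow> f k = f' k) \<Longrightarrow> Crow m f i = Crow m f' i"
  unfolding Crow_def by (intro sum.cong refl) auto

lemma Srow_cong: "(\<And>k. k < m+3 \<Longrightarrow> f k = f' k) \<Longrightarrow> Srow m f i = Srow m f' i"
  unfolding Srow_def by (intro sum.cong refl) auto

lemma sum3: "(\<Sum>k<(m::nat)+3. f k) = (\<Sum>k<m+2. f k) + (f (m+2) :: complex)"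
proof -
  have "(\<Sum>k<m+3. f k) = (\<Sum>k\<in>insert (m+2) {..<m+2}. f k)" by (rule sum.cong) auto
  also have "\<dots> = f (m+2) + (\<Sum>k<m+2. f k)" by (rule sum.insert) auto
  finally show ?thesis by simp
qed

lemma sumM: "(\<Sum>k\<in>{(m::nat)+2..<2*m+5}. f k) = f (m+2) + (\<Sum>k\<in>{m+3..<2*m+5}. (f k :: complex))"
proof -
  have "(\<Sum>k\<in>{m+2..<2*m+5}. f k) = (\<Sum>k\<in>insert (m+2) {m+3..<2*m+5}. f k)" by (rule sum.cong) auto
  also have "\<dots> = f (m+2) + (\<Sum>k\<in>{m+3..<2*m+5}. f k)" by (rule sum.insert) auto
  finally show ?thesis .
qed

lemma sumN: "(\<Sum>k<2*(m::nat)+5. f k) = (\<Sum>k<m+2. f k) + f (m+2) + (\<Sum>k\<in>{m+3..<2*m+5}. (f k :: complex))"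
  using split_sum[where a="m+3" and N="2*m+5" and g=f] sum3[where m=m and f=f] by simp

lemma eigen_iff: assumes "A \<in> carrier_mat N N" 
  shows "eigenvector A v l \<longleftrightarrow> v \<in> carrier_vec N \<and> (\<exists>k<N. v$k \<noteq> 0) \<and> (\<forall>i<N. (A *\<^sub>v v) $ i = l * v $ i)"
proof -
  have "v \<in> carrier_vec N \<Longrightarrow> v \<noteq> 0\<^sub>v N \<longleftrightarrow> (\<exists>k<N. v$k \<noteq> 0)"
    by (auto simp: vec_eq_iff)
  moreover have "v \<in> carrier_vec N \<Longrightarrow> A *\<^sub>v v = l \<cdot>\<^sub>v v \<longleftrightarrow> (\<forall>i<N. (A *\<^sub>v v) $ i = l * v $ i)"
    using assms by (auto simp: vec_eq_iff)
  ultimately show ?thesis unfolding eigenvector_def using assms by auto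
qed



lemma dirA: assumes ev: "eigenvector (super_compacted_matrix (m+3)) u l"
  shows "eigenvalue (compacted_matrix (m+3)) l"
proof -
  let ?S = "super_compacted_matrix (m+3)" and ?C = "compacted_matrix (m+3)"
  define g where "g k = u$k" for k
  from ev[unfolded eigen_iff[OF S_carrier]] obtain k0 where
    u: "u \<in> carrier_vec (m+3)" and k0: "k0 < m+3" "u$k0 \<noteq> 0" and
    eq: "\<And>i. i < m+3 \<Longrightarrow> (?S *\<^sub>v u) $ i = l * u $ i" by blast
  have Sg: "Srow m g i = l * g i" if "i < m+3" for i
    using eq[OF that] S_mult[OF u that] unfolding g_def by simp
  define f where "f k = (if k < m+2 then g k else if k = m+2 then 2 * g (m+2) else g (2*m+4-k))" for k
  define v where "v = vec (2*m+5) f"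
  have v: "v \<in> carrier_vec (2*m+5)" unfolding v_def by simp
  have vf: "v $ k = f k" if "k < 2*m+5" for k using that unfolding v_def by simp
  define G where "G = (\<Sum>k<m+2. g k)"
  have sA: "(\<Sum>k<m+2. f k) = G" unfolding G_def f_def by (intro sum.cong) auto
  have sB: "(\<Sum>k\<in>{m+3..<2*m+5}. f k) = G" unfolding refl_sum G_def
    by (intro sum.cong refl) (auto simp: f_def)
  have f2: "f (m+2) = 2 * g (m+2)" unfolding f_def by simp
  have Cf: "Crow m f i = l * f i" if i: "i < 2*m+5" for i
  proof -
    consider "i < m" | "i = m" | "i = m+1" | "i = m+2" | "i = m+3" | "i = m+4" | "m+5 \<le> i" by linarith
    then show ?thesis
    proof cases
      case 1
      then show ?thesis using Crow_shift1[OF 1, of f] Srow_shift[OF 1, of g] Sg[of i] by (simp add: f_def)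
    next
      case 2
      then show ?thesis using Crow_m[of m f] Srow_m[of m g] Sg[of m] by (simp add: f_def)
    next
      case 3
      have "Crow m f i = of_nat (m+1) * (G + 2 * g (m+2)) + of_nat (m+2) * G"
        using 3 Crow_m1[of m f] sA sB f2 sum3[where m=m and f=f] by simp
      also have "\<dots> = of_nat (2*m+3) * G + of_nat (2*m+2) * g (m+2)" by (simp add: algebra_simps)
      also have "\<dots> = l * g (m+1)" using Srow_m1[of m g] Sg[of "m+1"] G_def by simp
      finally show ?thesis using 3 by (simp add: f_def)
    next
      case 4
      have "Crow m f i = 2 * (G + g (m+2))"
        using 4 Crow_m2[of m f] sA sB f2 sumN[where m=m and f=f] by simp
      also have "\<dots> = 2 * (l * g (m+2))" using Srow_m2[of m g] Sg[of "m+2"] sum3[where m=m and f=g] G_def by simp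
      finally show ?thesis using 4 f2 by simp
    next
      case 5
      have "Crow m f i = of_nat (m+2) * G + of_nat (m+1) * (2 * g (m+2) + G)"
        using 5 Crow_m3[of m f] sA sB f2 sumM[where m=m and f=f] by simp
      also have "\<dots> = of_nat (2*m+3) * G + of_nat (2*m+2) * g (m+2)" by (simp add: algebra_simps)
      also have "\<dots> = l * g (m+1)" using Srow_m1[of m g] Sg[of "m+1"] G_def by simp
      finally show ?thesis using 5 by (simp add: f_def)
    next
      case 6
      have "Crow m f i = 2 * g (m+2) + g (m+1)" using 6 Crow_m4[of m f] by (simp add: f_def)
      also have "\<dots> = l * g m" using Srow_m[of m g] Sg[of m] by simp
      finally show ?thesis using 6 by (simp add: f_def)
    next
      case 7
      have j: "2*m+4-i < m" using 7 i by linarith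
      have c: "Crow m f i = f (i-1)" using Crow_shift2[OF 7 i] .
      have e: "2*m+4-(i-1) = 2*m+4-i+1" "\<not> (i-1 < m+2)" "i-1 \<noteq> m+2" using 7 i by linarith+
      have "f (i-1) = g (2*m+4-i+1)" unfolding f_def by (simp only: e if_False)
      also
      have "g (2*m+4-i+1) = Srow m g (2*m+4-i)" using Srow_shift[OF j] by simp
      also have "\<dots> = l * g (2*m+4-i)" using Sg j by simp
      finally show ?thesis using 7 c by (simp add: f_def)
    qed
  qed
  have "eigenvector ?C v l"
    unfolding eigen_iff[OF C_carrier]
  proof (intro conjI allI impI)
    show "v \<in> carrier_vec (2*m+5)" by (rule v)
    show "\<exists>k<2*m+5. v$k \<noteq> 0"
    proof (cases "k0 < m+2")
      case True
      then show ?thesis using k0 vf[of k0] by (intro exI[of _ k0]) (simp add: f_def g_def)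
    next
      case False
      hence "k0 = m+2" using k0 by simp
      then show ?thesis using k0 vf[of k0] by (intro exI[of _ k0]) (simp add: f_def g_def)
    qed
    fix i assume i: "i < 2*m+5"
    have "(?C *\<^sub>v v) $ i = Crow m (\<lambda>k. v$k) i" using C_mult[OF v i] .
    also have "\<dots> = Crow m f i" by (rule Crow_cong) (simp add: vf)
    also have "\<dots> = l * v $ i" using Cf[OF i] vf[OF i] by simp
    finally show "(?C *\<^sub>v v) $ i = l * v $ i" .
  qed
  then show ?thesis unfolding eigenvalue_def by blast
qed



lemma dirB: assumes ev: "eigenvector (compacted_matrix (m+3)) v l" and nl: "norm l > 1"
  shows "eigenvalue (super_compacted_matrix (m+3)) l"
proof -
  let ?S = "super_compacted_matrix (m+3)" and ?C = "compacted_matrix (m+3)"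
  define f where "f k = v$k" for k
  from ev[unfolded eigen_iff[OF C_carrier]] obtain k0 where
    v: "v \<in> carrier_vec (2*m+5)" and k0: "k0 < 2*m+5" "v$k0 \<noteq> 0" and
    eq: "\<And>i. i < 2*m+5 \<Longrightarrow> (?C *\<^sub>v v) $ i = l * v $ i" by blast
  have Cf: "Crow m f i = l * f i" if "i < 2*m+5" for i
    using eq[OF that] C_mult[OF v that] unfolding f_def by simp
  define A where "A = (\<Sum>k<m+2. f k)"
  define B where "B = (\<Sum>k\<in>{m+3..<2*m+5}. f k)"
  have B': "B = (\<Sum>k<m+2. f (2*m+4-k))" unfolding B_def refl_sum ..
  have r1: "Crow m f (m+1) = of_nat (m+1) * (A + f (m+2)) + of_nat (m+2) * B"
    using Crow_m1[of m f] sum3[where m=m and f=f] A_def B_def by simp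
  have r3: "Crow m f (m+3) = of_nat (m+2) * A + of_nat (m+1) * (f (m+2) + B)"
    using Crow_m3[of m f] sumM[where m=m and f=f] A_def B_def by simp
  show ?thesis
  proof (cases "\<exists>k<2*m+5. f k + f (2*m+4-k) \<noteq> 0")
    case True
    then obtain k1 where k1: "k1 < 2*m+5" "f k1 + f (2*m+4-k1) \<noteq> 0" by blast
    define g where "g k = (if k < m+2 then f k + f (2*m+4-k) else f (m+2))" for k
    define u where "u = vec (m+3) g"
    have u: "u \<in> carrier_vec (m+3)" unfolding u_def by simp
    have ug: "u $ k = g k" if "k < m+3" for k using that unfolding u_def by simp
    have sG: "(\<Sum>k<m+2. g k) = A + B" unfolding A_def B' g_def
      by (simp add: sum.distrib)
    have Sg: "Srow m g i = l * g i" if i: "i < m+3" for i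
    proof -
      consider "i < m" | "i = m" | "i = m+1" | "i = m+2" using i by linarith
      then show ?thesis
      proof cases
        case 1
        have j: "m+5 \<le> 2*m+4-i" "2*m+4-i < 2*m+5" using 1 by linarith+
        have e: "2*m+4-i-1 = 2*m+4-(i+1)" using 1 by linarith
        have "Srow m g i = f (i+1) + f (2*m+4-(i+1))" using Srow_shift[OF 1, of g] 1 by (simp add: g_def)
        also have "\<dots> = Crow m f i + Crow m f (2*m+4-i)"
          using Crow_shift1[OF 1, of f] Crow_shift2[OF j, of f] e by simp
        also have "\<dots> = l * (f i + f (2*m+4-i))" using Cf[of i] Cf[of "2*m+4-i"] 1 j
          by (simp add: algebra_simps)
        finally show ?thesis using 1 by (simp add: g_def)
      next
        case 2
        have "Srow m g i = (f (m+2) + f (m+1)) + (f (m+2) + f (m+3))"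
          using 2 Srow_m[of m g] by (simp add: g_def ac_simps)
        also have "\<dots> = Crow m f m + Crow m f (m+4)" using Crow_m[of m f] Crow_m4[of m f] by simp
        also have "\<dots> = l * (f m + f (m+4))" using Cf[of m] Cf[of "m+4"] by (simp add: algebra_simps)
        finally show ?thesis using 2 by (simp add: g_def)
      next
        case 3
        have "Srow m g i = of_nat (2*m+3) * (A + B) + of_nat (2*m+2) * f (m+2)"
          using 3 Srow_m1[of m g] sG by (simp add: g_def)
        also have "\<dots> = Crow m f (m+1) + Crow m f (m+3)" unfolding r1 r3 by (simp add: algebra_simps)
        also have "\<dots> = l * (f (m+1) + f (m+3))" using Cf[of "m+1"] Cf[of "m+3"] by (simp add: algebra_simps)
        finally show ?thesis using 3 by (simp add: g_def ac_simps)
      next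
        case 4
        have "Srow m g i = A + B + f (m+2)"
          using 4 Srow_m2[of m g] sG sum3[where m=m and f=g] by (simp add: g_def)
        also have "\<dots> = Crow m f (m+2)" using Crow_m2[of m f] sumN[where m=m and f=f] A_def B_def by simp
        also have "\<dots> = l * f (m+2)" using Cf[of "m+2"] by simp
        finally show ?thesis using 4 by (simp add: g_def)
      qed
    qed
    have "eigenvector ?S u l"
      unfolding eigen_iff[OF S_carrier]
    proof (intro conjI allI impI)
      show "u \<in> carrier_vec (m+3)" by (rule u)
      show "\<exists>k<m+3. u$k \<noteq> 0"
      proof -
        consider "k1 < m+2" | "k1 = m+2" | "m+3 \<le> k1" by linarith
        then show ?thesis
        proof cases
          case 1 then show ?thesis using k1 ug[of k1] by (intro exI[of _ k1]) (simp add: g_def)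
        next
          case 2 then show ?thesis using k1 ug[of k1] by (intro exI[of _ k1]) (simp add: g_def)
        next
          case 3
          have e: "2*m+4-(2*m+4-k1) = k1" "2*m+4-k1 < m+2" using 3 k1 by linarith+
          show ?thesis using k1 ug[of "2*m+4-k1"] e by (intro exI[of _ "2*m+4-k1"]) (simp add: g_def add.commute)
        qed
      qed
      fix i assume i: "i < m+3"
      have "(?S *\<^sub>v u) $ i = Srow m (\<lambda>k. u$k) i" using S_mult[OF u i] .
      also have "\<dots> = Srow m g i" by (rule Srow_cong) (simp add: ug)
      also have "\<dots> = l * u $ i" using Sg[OF i] ug[OF i] by simp
      finally show "(?S *\<^sub>v u) $ i = l * u $ i" .
    qed
    then show ?thesis unfolding eigenvalue_def by blast
  next
    case False
    hence anti: "f (2*m+4-k) = - f k" if "k < 2*m+5" for k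
      using that by (auto simp: add_eq_0_iff)
    have f2: "f (m+2) = 0" using anti[of "m+2"] by simp
    have step: "f (i+1) = l * f i" if "i \<le> m" for i
    proof (cases "i < m")
      case True then show ?thesis using Crow_shift1[OF True, of f] Cf[of i] by simp
    next
      case False
      hence "i = m" using that by simp
      then show ?thesis using Crow_m[of m f] Cf[of m] f2 by simp
    qed
    have pw: "f i = l^i * f 0" if "i \<le> m+1" for i
      using that
    proof (induction i)
      case 0 then show ?case by simp
    next
      case (Suc i) then show ?case using step[of i] by simp
    qed
    have BA: "B = - A" unfolding B' A_def
      by (subst sum_negf[symmetric]) (intro sum.cong refl, simp add: anti)
    have h0: "A + l * f (m+1) = 0" using Cf[of "m+1"] r1 f2 BA by (simp add: algebra_simps)
    have "l * f (m+1) = - A" using h0 by (metis add_eq_0_iff)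
    have pm: "f (m+1) = l^(m+1) * f 0" using pw[of "m+1"] by simp
    have lp: "l^(m+2) = l * l^(m+1)" by simp
    have key: "l^(m+2) * f 0 + A = 0"
    proof -
      have "l^(m+2) * f 0 + A = l * f (m+1) + A" unfolding pm lp by (simp only: mult.assoc)
      also have "\<dots> = 0" unfolding \<open>l * f (m+1) = - A\<close> by simp
      finally show ?thesis .
    qed
    have Aeq: "A = (\<Sum>k<m+2. l^k) * f 0" unfolding A_def sum_distrib_right
    proof (intro sum.cong refl)
      fix k assume "k \<in> {..<m+2}"
      thus "f k = l^k * f 0" by (intro pw) simp
    qed
    have "f 0 * (\<Sum>k<m+3. l^k) = f 0 * (\<Sum>k<m+2. l^k) + f 0 * l^(m+2)"
      by (simp only: sum3[where m=m and f="\<lambda>k. l^k"] distrib_left)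
    also have "\<dots> = l^(m+2) * f 0 + A" unfolding Aeq by (simp only: mult.commute add.commute)
    also have "\<dots> = 0" by (rule key)
    finally have "f 0 * (\<Sum>k<m+3. l^k) = 0" .
    moreover have "f 0 \<noteq> 0"
    proof
      assume f0: "f 0 = 0"
      have "f k = 0" if "k < 2*m+5" for k
      proof -
        consider "k \<le> m+1" | "k = m+2" | "m+3 \<le> k" by linarith
        then show ?thesis
        proof cases
          case 1
          have "f k = l^k * f 0" using pw 1 by blast
          then show ?thesis using f0 by simp
        next
          case 2 then show ?thesis using f2 by simp
        next
          case 3
          have "f (2*m+4-k) = l^(2*m+4-k) * f 0" using 3 by (intro pw) simp
          hence "f (2*m+4-k) = 0" using f0 by simp
          then show ?thesis using anti[OF that] by simp
        qed
      qed
      then show False using k0 unfolding f_def by simp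
    qed
    ultimately have s0: "(\<Sum>k<m+3. l^k) = 0" by simp
    have "l^(m+3) - 1 = 0" using power_diff_1_eq[of l "m+3"] s0 by simp
    hence "l^(m+3) = 1" by simp
    hence "norm l ^ (m+3) = 1" by (metis norm_one norm_power)
    moreover have "norm l ^ (m+3) > 1" using nl by (intro one_less_power) auto
    ultimately show ?thesis by simp
  qed
qed



theorem proposition5p1:
  fixes n :: nat
  assumes "n \<ge> 3"
  shows "max (spectral_radius (compacted_matrix n)) 1
       = max (spectral_radius (super_compacted_matrix n)) 1"
proof -
  obtain m where n: "n = m+3" using assms by (metis add.commute le_Suc_ex)
  let ?C = "compacted_matrix (m+3)" and ?S = "super_compacted_matrix (m+3)"
  have Cc: "?C \<in> carrier_mat (2*m+5) (2*m+5)" by (rule C_carrier)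
  have Sc: "?S \<in> carrier_mat (m+3) (m+3)" by (rule S_carrier)
  from spectral_radius_mem_max(1)[OF Cc] obtain lc where lc: "lc \<in> spectrum ?C" "spectral_radius ?C = norm lc" by auto
  from spectral_radius_mem_max(1)[OF Sc] obtain ls where ls: "ls \<in> spectrum ?S" "spectral_radius ?S = norm ls" by auto
  have le1: "spectral_radius ?S \<le> spectral_radius ?C"
  proof -
    from ls(1) obtain u where "eigenvector ?S u ls" unfolding spectrum_def eigenvalue_def by auto
    hence "eigenvalue ?C ls" by (rule dirA)
    hence "norm ls \<in> norm ` spectrum ?C" unfolding spectrum_def by auto
    thus ?thesis using spectral_radius_mem_max(2)[OF Cc] ls(2) by simp
  qed
  have le2: "spectral_radius ?C \<le> spectral_radius ?S" if gt: "spectral_radius ?C > 1"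
  proof -
    from lc(1) obtain v where "eigenvector ?C v lc" unfolding spectrum_def eigenvalue_def by auto
    hence "eigenvalue ?S lc" by (rule dirB) (use gt lc(2) in simp)
    hence "norm lc \<in> norm ` spectrum ?S" unfolding spectrum_def by auto
    thus ?thesis using spectral_radius_mem_max(2)[OF Sc] lc(2) by simp
  qed
  show ?thesis unfolding n using le1 le2 by (cases "spectral_radius ?C > 1") (auto simp: max_def)
qed


end
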